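(* Consider the cubic system \[ \dot x = -y + a_{02}y^2 + a_{03}y^3,\qquad \dot y = x + b_{20}x^2 + b_{11}xy + b_{02}y^2 + b_{30}x^3 + b_{21}x^2y + b_{12}xy^2, \] where the coefficients $a_{02},a_{03},b_{20},b_{11},b_{02},b_{30},b_{21},b_{12}$ are allowed to be complex (the system being considered on $\mathbb{C}^2$; for real coefficients this is a real planar system). The system is linearizable at the origin if one of the following conditions holds: \begin{enumerate} \item $b_{12}=a_{02}=b_{30}=b_{21}=a_{03}=b_{02}+b_{20}=b_{11}^2+4b_{20}^2=0$; \item $b_{12}=a_{02}=b_{20}=b_{02}=b_{21}=a_{03}=9b_{30}-b_{11}^2=0$; \item $b_{12}=a_{02}=b_{11}=b_{20}=b_{30}=b_{21}=9a_{03}+4b_{02}^2=0$; \item $b_{12}=b_{30}=b_{21}=a_{03}=2b_{02}+5b_{20}=10a_{02}-3b_{11}=4b_{11}^2+25b_{20}^2=0$. \end{enumerate}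
   Context: A system $\dot x=-y+P(x,y)$, $\dot y = x+Q(x,y)$, with $P,Q$ polynomials without constant and linear terms, is called linearizable (at the origin) if there is an analytic change of coordinates $x_1 = x+\sum_{m+n\ge 2}c_{m,n}x^my^n$, $y_1=y+\sum_{m+n\ge2}d_{m,n}x^my^n$ which transforms it into $\dot x_1=-y_1$, $\dot y_1 = x_1$. For real systems, linearizability at the origin is equivalent to the origin being an isochronous center (a center all of whose nearby periodic orbits have the same period). *)

theory Defs
  imports "HOL-Analysis.Analysis"
begin

definition dps :: "(nat \<Rightarrow> nat \<Rightarrow> complex) \<Rightarrow> complex \<Rightarrow> complex \<Rightarrow> complex" where
  "dps c x y = (\<Sum>\<^sub>\<infinity>(m,n)\<in>UNIV. c m n * x ^ m * y ^ n)"

text \<open>The system xdot = -y + P(x,y), ydot = x + Q(x,y) is linearizable at the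
  origin: there is an analytic change of coordinates
  x1 = x + sum_{m+n>=2} c_mn x^m y^n, y1 = y + sum_{m+n>=2} d_mn x^m y^n,
  given by double power series converging (absolutely) on a polydisc around 0,
  such that along the vector field (Lie derivative) xdot1 = -y1 and ydot1 = x1.\<close>
definition linearizable ::
  "(complex \<Rightarrow> complex \<Rightarrow> complex) \<Rightarrow> (complex \<Rightarrow> complex \<Rightarrow> complex) \<Rightarrow> bool" where
  "linearizable P Q \<longleftrightarrow>
    (\<exists>c d :: nat \<Rightarrow> nat \<Rightarrow> complex. \<exists>r>0.
       c 0 0 = 0 \<and> c 1 0 = 1 \<and> c 0 1 = 0 \<and>
       d 0 0 = 0 \<and> d 1 0 = 0 \<and> d 0 1 = 1 \<and>
       (\<forall>x y. cmod x < r \<and> cmod y < r \<longrightarrow>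
          (\<lambda>(m,n). c m n * x ^ m * y ^ n) summable_on UNIV \<and>
          (\<lambda>(m,n). d m n * x ^ m * y ^ n) summable_on UNIV \<and>
          ((\<lambda>t. dps c (x + t * (- y + P x y)) (y + t * (x + Q x y)))
              has_field_derivative (- dps d x y)) (at 0) \<and>
          ((\<lambda>t. dps d (x + t * (- y + P x y)) (y + t * (x + Q x y)))
              has_field_derivative (dps c x y)) (at 0)))"

end

theory Submission
  imports Defs
begin


definition mono2 :: "nat \<Rightarrow> nat \<Rightarrow> nat \<Rightarrow> nat \<Rightarrow> complex" where
  "mono2 a b m n = (if m = a \<and> n = b then 1 else 0)"

definition conv :: "(nat \<Rightarrow> nat \<Rightarrow> complex) \<Rightarrow> (nat \<Rightarrow> nat \<Rightarrow> complex) \<Rightarrow> nat \<Rightarrow> nat \<Rightarrow> complex" where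
  "conv c d M N = (\<Sum>i\<le>M. \<Sum>j\<le>N. c i j * d (M-i) (N-j))"

definition fam :: "(nat \<Rightarrow> nat \<Rightarrow> complex) \<Rightarrow> complex \<Rightarrow> complex \<Rightarrow> nat \<times> nat \<Rightarrow> complex" where
  "fam c x y = (\<lambda>(m,n). c m n * x^m * y^n)"

definition maj :: "(nat \<Rightarrow> nat \<Rightarrow> complex) \<Rightarrow> complex \<Rightarrow> complex \<Rightarrow> real" where
  "maj c x y = infsum (\<lambda>p. norm (fam c x y p)) UNIV"

lemma dps_fam: "dps c x y = infsum (fam c x y) UNIV"
  unfolding dps_def fam_def by simp

lemma prod_abs_summable:
  fixes f g :: "'a \<Rightarrow> complex"
  assumes f: "(\<lambda>p. norm (f p)) summable_on UNIV" and g: "(\<lambda>p. norm (g p)) summable_on UNIV"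
  shows "(\<lambda>x. norm (case x of (p,q) \<Rightarrow> f p * g q)) summable_on UNIV"
    and "infsum (\<lambda>(p,q). f p * g q) UNIV = infsum f UNIV * infsum g UNIV"
    and "infsum (\<lambda>(p,q). norm (f p * g q)) UNIV = infsum (\<lambda>p. norm (f p)) UNIV * infsum (\<lambda>p. norm (g p)) UNIV"
proof -
  let ?Sg = "infsum (\<lambda>p. norm (g p)) UNIV"
  have inner: "((\<lambda>q. norm (f p) * norm (g q)) has_sum norm (f p) * ?Sg) UNIV" for p
    using g by (intro has_sum_cmult_right has_sum_infsum)
  have outer: "(\<lambda>p. norm (f p) * ?Sg) summable_on UNIV"
    using f by (intro summable_on_cmult_left)
  have "(\<lambda>(p,q). norm (f p) * norm (g q)) summable_on Sigma UNIV (\<lambda>_. UNIV)"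
    apply (rule summable_on_SigmaI[where f="\<lambda>(p,q). norm (f p) * norm (g q)" and g="\<lambda>p. norm (f p) * ?Sg"])
    using inner outer by auto
  then show 1: "(\<lambda>x. norm (case x of (p,q) \<Rightarrow> f p * g q)) summable_on UNIV"
    by (simp add: case_prod_unfold norm_mult)
  have "infsum (\<lambda>(p,q). f p * g q) UNIV = infsum (\<lambda>p. infsum (\<lambda>q. f p * g q) UNIV) UNIV"
    using infsum_Sigma'_banach[of "\<lambda>p q. f p * g q" UNIV "\<lambda>_. UNIV"] abs_summable_summable[OF 1]
    by simp
  also have "\<dots> = infsum (\<lambda>p. f p * infsum g UNIV) UNIV"
    by (simp add: infsum_cmult_right')
  also have "\<dots> = infsum f UNIV * infsum g UNIV"
    by (simp add: infsum_cmult_left')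
  finally show "infsum (\<lambda>(p,q). f p * g q) UNIV = infsum f UNIV * infsum g UNIV" .
  have "infsum (\<lambda>(p,q). norm (f p * g q)) UNIV = infsum (\<lambda>p. infsum (\<lambda>q. norm (f p) * norm (g q)) UNIV) UNIV"
    using infsum_Sigma'_banach[of "\<lambda>p q. norm (f p) * norm (g q)" UNIV "\<lambda>_. UNIV"] 1
    by (simp add: norm_mult case_prod_unfold)
  also have "\<dots> = infsum (\<lambda>p. norm (f p) * ?Sg) UNIV"
    by (simp add: infsum_cmult_right')
  also have "\<dots> = infsum (\<lambda>p. norm (f p)) UNIV * ?Sg"
    by (simp add: infsum_cmult_left')
  finally show "infsum (\<lambda>(p,q). norm (f p * g q)) UNIV = infsum (\<lambda>p. norm (f p)) UNIV * ?Sg" .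
qed

lemma fiber_sum:
  fixes c d :: "nat \<Rightarrow> nat \<Rightarrow> complex"
  shows "(\<Sum>(i,j)\<in>{..M}\<times>{..N}. c i j * x^i * y^j * (d (M-i) (N-j) * x^(M-i) * y^(N-j)))
         = conv c d M N * x^M * y^N"
proof -
  have "(\<Sum>(i,j)\<in>{..M}\<times>{..N}. c i j * x^i * y^j * (d (M-i) (N-j) * x^(M-i) * y^(N-j)))
      = (\<Sum>(i,j)\<in>{..M}\<times>{..N}. c i j * d (M-i) (N-j) * x^M * y^N)"
  proof (rule sum.cong[OF refl])
    fix z assume "z \<in> {..M}\<times>{..N}"
    then obtain i j where z: "z = (i,j)" "i \<le> M" "j \<le> N" by auto
    have "x^i * x^(M-i) = x^M" "y^j * y^(N-j) = y^N"
      using z by (simp_all flip: power_add)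
    then show "(case z of (i,j) \<Rightarrow> c i j * x^i * y^j * (d (M-i) (N-j) * x^(M-i) * y^(N-j)))
        = (case z of (i,j) \<Rightarrow> c i j * d (M-i) (N-j) * x^M * y^N)"
      using z by (simp add: algebra_simps) (metis mult.assoc mult.commute)
  qed
  also have "\<dots> = (\<Sum>i\<le>M. \<Sum>j\<le>N. c i j * d (M-i) (N-j)) * x^M * y^N"
    by (simp add: sum.cartesian_product[symmetric] sum_distrib_right)
  finally show ?thesis by (simp add: conv_def)
qed

lemma conv_main:
  fixes c d :: "nat \<Rightarrow> nat \<Rightarrow> complex"
  assumes f: "(\<lambda>p. norm (fam c x y p)) summable_on UNIV"
      and g: "(\<lambda>p. norm (fam d x y p)) summable_on UNIV"
  shows "(\<lambda>p. norm (fam (conv c d) x y p)) summable_on UNIV"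
    and "dps (conv c d) x y = dps c x y * dps d x y"
    and "maj (conv c d) x y \<le> maj c x y * maj d x y"
proof -
  define H where "H = (\<lambda>z. case z of (p,q) \<Rightarrow> fam c x y p * fam d x y q)"
  define T :: "((nat\<times>nat)\<times>(nat\<times>nat)) set" where "T = Sigma UNIV (\<lambda>(M,N). {..M}\<times>{..N})"
  define \<iota> :: "(nat\<times>nat)\<times>(nat\<times>nat) \<Rightarrow> (nat\<times>nat)\<times>(nat\<times>nat)"
    where "\<iota> = (\<lambda>((M,N),(i,j)). ((i,j),(M-i,N-j)))"
  define \<kappa> :: "(nat\<times>nat)\<times>(nat\<times>nat) \<Rightarrow> (nat\<times>nat)\<times>(nat\<times>nat)"
    where "\<kappa> = (\<lambda>((m,n),(m',n')). ((m+m',n+n'),(m,n)))"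
  have bij: "bij_betw \<iota> T UNIV"
    by (rule bij_betw_byWitness[where f'=\<kappa>]) (auto simp: T_def \<iota>_def \<kappa>_def)
  have P1: "(\<lambda>z. norm (H z)) summable_on UNIV" and P2: "infsum H UNIV = dps c x y * dps d x y"
    and P3: "infsum (\<lambda>z. norm (H z)) UNIV = maj c x y * maj d x y"
    using prod_abs_summable[OF f g] by (simp_all add: H_def dps_fam maj_def case_prod_unfold)
  have S1: "(\<lambda>z. norm (H (\<iota> z))) summable_on T"
    using summable_on_reindex_bij_betw[OF bij, of "\<lambda>z. norm (H z)"] P1 by simp
  have S2: "(\<lambda>z. H (\<iota> z)) summable_on T"
    using summable_on_reindex_bij_betw[OF bij, of H] abs_summable_summable[OF P1] by simp
  have I1: "infsum (\<lambda>z. H (\<iota> z)) T = infsum H UNIV"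
    using infsum_reindex_bij_betw[OF bij, of H] by simp
  have I2: "infsum (\<lambda>z. norm (H (\<iota> z))) T = infsum (\<lambda>z. norm (H z)) UNIV"
    using infsum_reindex_bij_betw[OF bij, of "\<lambda>z. norm (H z)"] by simp
  have Hi: "H (\<iota> ((M,N),(i,j))) = c i j * x^i * y^j * (d (M-i) (N-j) * x^(M-i) * y^(N-j))" for M N i j
    by (simp add: H_def \<iota>_def fam_def)
  have Hi': "H (\<iota> (MN,ij)) = c (fst ij) (snd ij) * x^fst ij * y^snd ij * (d (fst MN - fst ij) (snd MN - snd ij) * x^(fst MN - fst ij) * y^(snd MN - snd ij))" for MN ij
    by (cases MN, cases ij) (simp add: Hi)
  have inner: "infsum (\<lambda>ij. H (\<iota> (MN,ij))) ({..fst MN}\<times>{..snd MN}) = fam (conv c d) x y MN" for MN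
    using fiber_sum[where M="fst MN" and N="snd MN" and c=c and d=d and x=x and y=y]
    by (cases MN) (simp add: Hi' fam_def case_prod_unfold)
  have innern: "infsum (\<lambda>ij. norm (H (\<iota> (MN,ij)))) ({..fst MN}\<times>{..snd MN}) \<ge> norm (fam (conv c d) x y MN)" for MN
  proof -
    have "norm (fam (conv c d) x y MN) = norm (sum (\<lambda>ij. H (\<iota> (MN,ij))) ({..fst MN}\<times>{..snd MN}))"
      using inner[of MN] by simp
    also have "\<dots> \<le> sum (\<lambda>ij. norm (H (\<iota> (MN,ij)))) ({..fst MN}\<times>{..snd MN})"
      by (rule norm_sum)
    finally show ?thesis by simp
  qed
  have TS: "T = Sigma UNIV (\<lambda>MN. {..fst MN}\<times>{..snd MN})"
    by (auto simp: T_def)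
  have A1: "(\<lambda>MN. infsum (\<lambda>ij. norm (H (\<iota> (MN,ij)))) ({..fst MN}\<times>{..snd MN})) summable_on UNIV"
    using summable_on_Sigma_banach[of "\<lambda>MN ij. norm (H (\<iota> (MN,ij)))" UNIV "\<lambda>MN. {..fst MN}\<times>{..snd MN}"]
      S1 by (simp add: TS case_prod_unfold)
  have A2: "infsum (\<lambda>MN. infsum (\<lambda>ij. norm (H (\<iota> (MN,ij)))) ({..fst MN}\<times>{..snd MN})) UNIV
      = infsum (\<lambda>z. norm (H (\<iota> z))) T"
    using infsum_Sigma'_banach[of "\<lambda>MN ij. norm (H (\<iota> (MN,ij)))" UNIV "\<lambda>MN. {..fst MN}\<times>{..snd MN}"]
      S1 by (simp add: TS case_prod_unfold)
  have A3: "infsum (\<lambda>MN. infsum (\<lambda>ij. H (\<iota> (MN,ij))) ({..fst MN}\<times>{..snd MN})) UNIV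
      = infsum (\<lambda>z. H (\<iota> z)) T"
    using infsum_Sigma'_banach[of "\<lambda>MN ij. H (\<iota> (MN,ij))" UNIV "\<lambda>MN. {..fst MN}\<times>{..snd MN}"]
      S2 by (simp add: TS case_prod_unfold)
  show C1: "(\<lambda>p. norm (fam (conv c d) x y p)) summable_on UNIV"
    by (rule summable_on_comparison_test[OF A1]) (use innern in auto)
  show "dps (conv c d) x y = dps c x y * dps d x y"
    using A3 I1 P2 inner by (simp add: dps_fam)
  have "maj (conv c d) x y \<le> infsum (\<lambda>MN. infsum (\<lambda>ij. norm (H (\<iota> (MN,ij)))) ({..fst MN}\<times>{..snd MN})) UNIV"
    unfolding maj_def by (rule infsum_mono[OF C1 A1]) (use innern in auto)
  then show "maj (conv c d) x y \<le> maj c x y * maj d x y"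
    using A2 I2 P3 by simp
qed

definition ps :: "(nat \<Rightarrow> nat \<Rightarrow> complex) \<Rightarrow> real \<Rightarrow> bool" where
  "ps c r \<longleftrightarrow> (\<forall>x y. cmod x < r \<longrightarrow> cmod y < r \<longrightarrow> (\<lambda>q. norm (fam c x y q)) summable_on UNIV)"

definition rep :: "real \<Rightarrow> (complex \<Rightarrow> complex \<Rightarrow> complex) \<Rightarrow> (nat \<Rightarrow> nat \<Rightarrow> complex) \<Rightarrow> bool" where
  "rep r F c \<longleftrightarrow> ps c r \<and> (\<forall>x y. cmod x < r \<longrightarrow> cmod y < r \<longrightarrow> dps c x y = F x y)"

lemma fam_mono2: "fam (mono2 a b) x y q = (if q = (a,b) then x^a * y^b else 0)"
  by (cases q) (auto simp: fam_def mono2_def)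

lemma mono2_point:
  shows "(\<lambda>q. norm (fam (mono2 a b) x y q)) summable_on UNIV"
    and "dps (mono2 a b) x y = x^a * y^b"
    and "maj (mono2 a b) x y = norm (x^a * y^b)"
proof -
  have fin: "finite {q \<in> UNIV. norm (fam (mono2 a b) x y q) \<noteq> 0}"
    by (rule finite_subset[of _ "{(a,b)}"]) (auto simp: fam_mono2 split: if_splits)
  show "(\<lambda>q. norm (fam (mono2 a b) x y q)) summable_on UNIV"
    by (rule finite_nonzero_values_imp_summable_on[OF fin])
  have "infsum (fam (mono2 a b) x y) UNIV = infsum (fam (mono2 a b) x y) {(a,b)}"
    by (rule infsum_cong_neutral) (auto simp: fam_mono2)
  then show "dps (mono2 a b) x y = x^a * y^b"
    by (simp add: dps_fam fam_mono2)
  have "infsum (\<lambda>q. norm (fam (mono2 a b) x y q)) UNIV = infsum (\<lambda>q. norm (fam (mono2 a b) x y q)) {(a,b)}"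
    by (rule infsum_cong_neutral) (auto simp: fam_mono2)
  then show "maj (mono2 a b) x y = norm (x^a * y^b)"
    by (simp add: maj_def fam_mono2)
qed

lemma rep_mono2: "rep r (\<lambda>x y. x^a * y^b) (mono2 a b)"
  using mono2_point by (auto simp: rep_def ps_def)

lemma rep_add:
  assumes "rep r F c" "rep r G d"
  shows "rep r (\<lambda>x y. F x y + G x y) (\<lambda>m n. c m n + d m n)"
  unfolding rep_def ps_def
proof (intro conjI allI impI)
  fix x y :: complex assume xy: "cmod x < r" "cmod y < r"
  have s1: "(\<lambda>q. norm (fam c x y q)) summable_on UNIV" "(\<lambda>q. norm (fam d x y q)) summable_on UNIV"
    using assms xy by (auto simp: rep_def ps_def)
  have "(\<lambda>q. norm (fam c x y q) + norm (fam d x y q)) summable_on UNIV"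
    by (rule summable_on_add[OF s1])
  then show "(\<lambda>q. norm (fam (\<lambda>m n. c m n + d m n) x y q)) summable_on UNIV"
    by (rule summable_on_comparison_test)
       (auto simp: fam_def case_prod_unfold distrib_right norm_triangle_ineq)
  have "dps (\<lambda>m n. c m n + d m n) x y = infsum (\<lambda>q. fam c x y q + fam d x y q) UNIV"
    by (simp add: dps_fam fam_def case_prod_unfold distrib_right)
  also have "\<dots> = dps c x y + dps d x y"
    using abs_summable_summable[OF s1(1)] abs_summable_summable[OF s1(2)]
    by (simp add: infsum_add dps_fam)
  finally show "dps (\<lambda>m n. c m n + d m n) x y = F x y + G x y"
    using assms xy by (simp add: rep_def)
qed

lemma rep_smult:
  assumes "rep r F c"
  shows "rep r (\<lambda>x y. a * F x y) (\<lambda>m n. a * c m n)"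
  unfolding rep_def ps_def
proof (intro conjI allI impI)
  fix x y :: complex assume xy: "cmod x < r" "cmod y < r"
  have s1: "(\<lambda>q. norm (fam c x y q)) summable_on UNIV"
    using assms xy by (auto simp: rep_def ps_def)
  have "(\<lambda>q. norm a * norm (fam c x y q)) summable_on UNIV"
    by (rule summable_on_cmult_right[OF s1])
  then show "(\<lambda>q. norm (fam (\<lambda>m n. a * c m n) x y q)) summable_on UNIV"
    by (simp add: fam_def case_prod_unfold norm_mult mult.assoc)
  have "dps (\<lambda>m n. a * c m n) x y = infsum (\<lambda>q. a * fam c x y q) UNIV"
    by (simp add: dps_fam fam_def case_prod_unfold mult.assoc)
  also have "\<dots> = a * dps c x y"
    by (simp add: infsum_cmult_right' dps_fam)
  finally show "dps (\<lambda>m n. a * c m n) x y = a * F x y"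
    using assms xy by (simp add: rep_def)
qed

lemma rep_conv:
  assumes "rep r F c" "rep r G d"
  shows "rep r (\<lambda>x y. F x y * G x y) (conv c d)"
  using assms conv_main unfolding rep_def ps_def by metis

lemma rep_shrink: "rep r F c \<Longrightarrow> r' \<le> r \<Longrightarrow> rep r' F c"
  unfolding rep_def ps_def by auto

lemma rep_cong: "rep r F c \<Longrightarrow> (\<And>x y. cmod x < r \<Longrightarrow> cmod y < r \<Longrightarrow> F x y = G x y) \<Longrightarrow> rep r G c"
  unfolding rep_def by auto

fun powc :: "(nat \<Rightarrow> nat \<Rightarrow> complex) \<Rightarrow> nat \<Rightarrow> nat \<Rightarrow> nat \<Rightarrow> complex" where
  "powc p 0 = mono2 0 0"
| "powc p (Suc k) = conv p (powc p k)"

lemma maj_nonneg: "maj c x y \<ge> 0"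
  unfolding maj_def by (rule infsum_nonneg) auto

lemma powc_point:
  assumes sp: "(\<lambda>q. norm (fam p x y q)) summable_on UNIV"
  shows "(\<lambda>q. norm (fam (powc p k) x y q)) summable_on UNIV \<and> dps (powc p k) x y = (dps p x y)^k
         \<and> maj (powc p k) x y \<le> (maj p x y)^k"
proof (induction k)
  case 0
  then show ?case using mono2_point[of 0 0 x y] by simp
next
  case (Suc k)
  then have a: "(\<lambda>q. norm (fam (powc p k) x y q)) summable_on UNIV" by blast
  note cm = conv_main[OF sp a]
  have "maj (conv p (powc p k)) x y \<le> maj p x y * maj (powc p k) x y" by (rule cm(3))
  also have "\<dots> \<le> maj p x y * maj p x y ^ k"
    using Suc maj_nonneg by (intro mult_left_mono) auto
  finally show ?case using cm Suc by simp
qed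

lemma powc_zero: "p 0 0 = 0 \<Longrightarrow> m + n < k \<Longrightarrow> powc p k m n = 0"
proof (induction k arbitrary: m n)
  case 0
  then show ?case by simp
next
  case (Suc k)
  have "(\<Sum>i\<le>m. \<Sum>j\<le>n. p i j * powc p k (m-i) (n-j)) = 0"
  proof (intro sum.neutral ballI)
    fix i j assume ij: "i \<in> {..m}" "j \<in> {..n}"
    show "p i j * powc p k (m-i) (n-j) = 0"
    proof (cases "i = 0 \<and> j = 0")
      case True then show ?thesis using Suc by simp
    next
      case False
      then have "(m-i) + (n-j) < k" using Suc.prems ij by auto
      then show ?thesis using Suc by simp
    qed
  qed
  then show ?case by (simp add: conv_def)
qed

definition pcomp :: "(nat \<Rightarrow> complex) \<Rightarrow> (nat \<Rightarrow> nat \<Rightarrow> complex) \<Rightarrow> nat \<Rightarrow> nat \<Rightarrow> complex" where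
  "pcomp a p m n = (\<Sum>k\<le>m+n. a k * powc p k m n)"

lemma comp_point:
  assumes p00: "p 0 0 = 0" and sp: "(\<lambda>q. norm (fam p x y q)) summable_on UNIV"
    and rho: "maj p x y \<le> \<rho>" and sa: "summable (\<lambda>k. norm (a k) * \<rho>^k)"
  shows "(\<lambda>q. norm (fam (pcomp a p) x y q)) summable_on UNIV"
    and "dps (pcomp a p) x y = (\<Sum>k. a k * (dps p x y)^k)"
proof -
  define U where "U = (\<lambda>z::nat\<times>(nat\<times>nat). a (fst z) * fam (powc p (fst z)) x y (snd z))"
  note pp = powc_point[OF sp]
  have inner: "((\<lambda>q. norm (U (k,q))) has_sum norm (a k) * maj (powc p k) x y) UNIV" for k
    unfolding U_def maj_def using pp[of k]
    by (simp add: norm_mult has_sum_cmult_right has_sum_infsum)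
  have m0: "0 \<le> maj p x y" by (rule maj_nonneg)
  have sa': "(\<lambda>k. norm (a k) * \<rho>^k) summable_on UNIV"
    using sa m0 rho by (subst summable_on_UNIV_nonneg_real_iff) auto
  have outer: "(\<lambda>k. norm (a k) * maj (powc p k) x y) summable_on UNIV"
  proof (rule summable_on_comparison_test[OF sa'])
    fix k :: nat
    have "maj (powc p k) x y \<le> maj p x y ^ k" using pp by blast
    also have "\<dots> \<le> \<rho>^k" using m0 rho by (intro power_mono) auto
    finally show "norm (a k) * maj (powc p k) x y \<le> norm (a k) * \<rho>^k"
      by (intro mult_left_mono) auto
    show "0 \<le> norm (a k) * maj (powc p k) x y" using maj_nonneg by simp
  qed
  have SU: "(\<lambda>z. norm (U z)) summable_on Sigma UNIV (\<lambda>_. UNIV)"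
    apply (rule summable_on_SigmaI[where f="\<lambda>z. norm (U z)" and g="\<lambda>k. norm (a k) * maj (powc p k) x y"])
    using inner outer by auto
  then have SU': "U summable_on UNIV"
    using abs_summable_summable by fastforce
  have I1: "infsum U UNIV = infsum (\<lambda>k. infsum (\<lambda>q. U (k,q)) UNIV) UNIV"
    using infsum_Sigma'_banach[of "\<lambda>k q. U (k,q)" UNIV "\<lambda>_. UNIV"] SU' by simp
  have inner2: "infsum (\<lambda>q. U (k,q)) UNIV = a k * (dps p x y)^k" for k
    using pp[of k] by (simp add: U_def infsum_cmult_right' dps_fam)
  have S3: "(\<lambda>k. a k * (dps p x y)^k) summable_on UNIV"
    using summable_on_Sigma_banach[of "\<lambda>k q. U (k,q)" UNIV "\<lambda>_. UNIV"] SU' inner2 by simp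
  have I2: "infsum U UNIV = (\<Sum>k. a k * (dps p x y)^k)"
    using I1 inner2 has_sum_imp_sums[OF has_sum_infsum[OF S3]] sums_unique by fastforce
  have U0: "U (k,(m,n)) = 0" if "m + n < k" for k m n
    using powc_zero[of p m n k, OF p00 that] by (simp add: U_def fam_def)
  have innerk: "infsum (\<lambda>k. U (k,q)) UNIV = fam (pcomp a p) x y q" for q
  proof -
    obtain m n where q: "q = (m,n)" by fastforce
    have "infsum (\<lambda>k. U (k,q)) UNIV = infsum (\<lambda>k. U (k,q)) {..m+n}"
      by (rule infsum_cong_neutral) (use U0 q in auto)
    also have "\<dots> = (\<Sum>k\<le>m+n. a k * powc p k m n) * x^m * y^n"
      by (simp add: q U_def fam_def sum_distrib_right mult.assoc)
    finally show ?thesis by (simp add: q pcomp_def fam_def)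
  qed
  have innerkn: "norm (fam (pcomp a p) x y q) \<le> infsum (\<lambda>k. norm (U (k,q))) UNIV" for q
  proof -
    obtain m n where q: "q = (m,n)" by fastforce
    have e1: "infsum (\<lambda>k. U (k,q)) UNIV = sum (\<lambda>k. U (k,q)) {..m+n}"
      by (subst infsum_cong_neutral[where T="{..m+n}" and g="\<lambda>k. U (k,q)"]) (use U0 q in auto)
    have e2: "infsum (\<lambda>k. norm (U (k,q))) UNIV = sum (\<lambda>k. norm (U (k,q))) {..m+n}"
      by (subst infsum_cong_neutral[where T="{..m+n}" and g="\<lambda>k. norm (U (k,q))"]) (use U0 q in auto)
    show ?thesis using innerk[of q] e1 e2 norm_sum[of "\<lambda>k. U (k,q)" "{..m+n}"] by simp
  qed
  have SUswap: "(\<lambda>z. norm (U (snd z, fst z))) summable_on Sigma UNIV (\<lambda>_. UNIV)"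
    using SU summable_on_swap[of "\<lambda>z. norm (U z)" UNIV UNIV] by (simp add: case_prod_unfold)
  have S4: "(\<lambda>q. infsum (\<lambda>k. norm (U (k,q))) UNIV) summable_on UNIV"
    using summable_on_Sigma_banach[of "\<lambda>q k. norm (U (k,q))" UNIV "\<lambda>_. UNIV"] SUswap
    by (simp add: case_prod_unfold)
  show "(\<lambda>q. norm (fam (pcomp a p) x y q)) summable_on UNIV"
    by (rule summable_on_comparison_test[OF S4]) (use innerkn in auto)
  have "infsum (\<lambda>k. infsum (\<lambda>q. U (k,q)) UNIV) UNIV = infsum (\<lambda>q. infsum (\<lambda>k. U (k,q)) UNIV) UNIV"
    by (rule infsum_swap_banach) (use SU' in \<open>simp add: case_prod_unfold\<close>)
  then show "dps (pcomp a p) x y = (\<Sum>k. a k * (dps p x y)^k)"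
    using I1 I2 innerk by (simp add: dps_fam)
qed

lemma maj_small:
  assumes p00: "p 0 0 = 0" and psp: "ps p r" and r0: "0 < r0" "r0 < r"
    and s: "s \<le> r0" "cmod x \<le> s" "cmod y \<le> s"
  shows "maj p x y \<le> (s/r0) * maj p (of_real r0) (of_real r0)"
proof -
  have s0: "0 \<le> s" using s norm_ge_zero order_trans by blast
  have A: "(\<lambda>q. norm (fam p x y q)) summable_on UNIV"
    using psp s r0 unfolding ps_def by auto
  have B: "(\<lambda>q. norm (fam p (of_real r0) (of_real r0) q)) summable_on UNIV"
    using psp r0 unfolding ps_def by auto
  have pw: "norm (fam p x y q) \<le> (s/r0) * norm (fam p (of_real r0) (of_real r0) q)" for q
  proof -
    obtain m n where q: "q = (m,n)" by fastforce
    show ?thesis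
    proof (cases "m + n = 0")
      case True then show ?thesis using p00 q by (simp add: fam_def)
    next
      case False
      define t where "t = s / r0"
      have t: "0 \<le> t" "t \<le> 1" using s0 s r0 by (auto simp: t_def)
      have "cmod x ^ m * cmod y ^ n \<le> s^m * s^n"
        using s s0 by (intro mult_mono power_mono) auto
      also have "\<dots> = t^(m+n) * r0^(m+n)"
        using r0 by (simp add: t_def power_add power_divide)
      also have "\<dots> \<le> t * r0^(m+n)"
        using t False power_decreasing[of 1 "m+n" t] r0 by (intro mult_right_mono) auto
      finally have "cmod x ^ m * cmod y ^ n \<le> t * (r0^m * r0^n)" by (simp add: power_add)
      then have "cmod (p m n) * (cmod x ^ m * cmod y ^ n) \<le> cmod (p m n) * (t * (r0^m * r0^n))"
        by (intro mult_left_mono) auto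
      then show ?thesis using r0
        by (simp add: q fam_def norm_mult norm_power t_def mult_ac)
    qed
  qed
  have "maj p x y \<le> infsum (\<lambda>q. (s/r0) * norm (fam p (of_real r0) (of_real r0) q)) UNIV"
    unfolding maj_def by (rule infsum_mono[OF A summable_on_cmult_right[OF B]]) (rule pw)
  also have "\<dots> = (s/r0) * maj p (of_real r0) (of_real r0)"
    unfolding maj_def by (rule infsum_cmult_right') 
  finally show ?thesis .
qed

lemma rep_comp:
  assumes R: "rep r P p" and p00: "p 0 0 = 0" and r: "r > 0" and rho: "\<rho> > 0"
    and sa: "summable (\<lambda>k. norm (a k) * \<rho>^k)"
  shows "\<exists>r'>0. r' \<le> r \<and> rep r' (\<lambda>x y. \<Sum>k. a k * P x y ^ k) (pcomp a p)
           \<and> (\<forall>x y. cmod x < r' \<longrightarrow> cmod y < r' \<longrightarrow> cmod (P x y) < \<rho>)"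
proof -
  define r0 where "r0 = r/2"
  define K where "K = maj p (of_real r0) (of_real r0)"
  define r' where "r' = min r0 (\<rho> * r0 / (2 * (K + 1)))"
  have K0: "K \<ge> 0" unfolding K_def by (rule maj_nonneg)
  have r0: "0 < r0" "r0 < r" using r by (auto simp: r0_def)
  have r'0: "r' > 0" using r0 rho K0 by (auto simp: r'_def)
  have psp: "ps p r" using R by (simp add: rep_def)
  have key: "maj p x y < \<rho>" if xy: "cmod x < r'" "cmod y < r'" for x y
  proof -
    define s where "s = max (cmod x) (cmod y)"
    have s: "s \<le> r0" "cmod x \<le> s" "cmod y \<le> s" "s < r'"
      using xy by (auto simp: s_def r'_def)
    have "maj p x y \<le> (s/r0) * K" unfolding K_def by (rule maj_small[OF p00 psp r0 s(1-3)])
    also have "\<dots> \<le> (r'/r0) * K" using s r0 K0 by (intro mult_right_mono divide_right_mono) auto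
    also have "\<dots> \<le> (\<rho> / (2*(K+1))) * K"
    proof (intro mult_right_mono K0)
      have "r' \<le> \<rho> * r0 / (2 * (K + 1))" by (simp add: r'_def)
      then have "r' / r0 \<le> (\<rho> * r0 / (2 * (K + 1))) / r0" using r0 by (intro divide_right_mono) auto
      also have "\<dots> = \<rho> / (2*(K+1))" using r0 K0 by (simp add: divide_simps)
      finally show "r' / r0 \<le> \<rho> / (2*(K+1))" .
    qed
    also have "\<dots> < \<rho>" using K0 rho by (simp add: field_simps) (smt (verit) mult_nonneg_nonneg)
    finally show ?thesis .
  qed
  have "rep r' (\<lambda>x y. \<Sum>k. a k * P x y ^ k) (pcomp a p)
           \<and> (\<forall>x y. cmod x < r' \<longrightarrow> cmod y < r' \<longrightarrow> cmod (P x y) < \<rho>)"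
    unfolding rep_def ps_def
  proof (intro conjI allI impI)
    fix x y assume xy: "cmod x < r'" "cmod y < r'"
    then have xy': "cmod x < r" "cmod y < r" using r0 by (auto simp: r'_def)
    have sp: "(\<lambda>q. norm (fam p x y q)) summable_on UNIV" using psp xy' by (auto simp: ps_def)
    have mk: "maj p x y \<le> \<rho>" using key[OF xy] by simp
    note cp = comp_point[OF p00 sp mk sa]
    show "(\<lambda>q. norm (fam (pcomp a p) x y q)) summable_on UNIV" by (rule cp(1))
    have PP: "dps p x y = P x y" using R xy' by (auto simp: rep_def)
    show "dps (pcomp a p) x y = (\<Sum>k. a k * P x y ^ k)" using cp(2) PP by simp
    have "cmod (P x y) \<le> maj p x y"
      unfolding PP[symmetric] dps_fam maj_def by (rule norm_infsum_bound) (use sp in simp)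
    then show "cmod (P x y) < \<rho>" using key[OF xy] by simp
  qed
  then show ?thesis using r'0 r0 by (auto simp: r'_def intro!: exI[of _ r'])
qed

lemma conv_00: "conv c d 0 0 = c 0 0 * d 0 0"
  by (simp add: conv_def)
lemma conv_10: "conv c d 1 0 = c 0 0 * d 1 0 + c 1 0 * d 0 0"
  by (simp add: conv_def)
lemma conv_01: "conv c d 0 1 = c 0 0 * d 0 1 + c 0 1 * d 0 0"
  by (simp add: conv_def)
lemma comp_00: "pcomp a p 0 0 = a 0"
  by (simp add: pcomp_def mono2_def)
lemma comp_10: "pcomp a p 1 0 = a 0 * mono2 0 0 1 0 + a 1 * (p 0 0 * mono2 0 0 1 0 + p 1 0)"
  by (simp add: pcomp_def conv_def mono2_def)
lemma comp_01: "pcomp a p 0 1 = a 0 * mono2 0 0 0 1 + a 1 * (p 0 0 * mono2 0 0 0 1 + p 0 1)"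
  by (simp add: pcomp_def conv_def mono2_def)

lemma rep_geom:
  assumes R: "rep r P p" and p00: "p 0 0 = 0" and r: "r > 0"
  shows "\<exists>r'>0. r' \<le> r \<and> rep r' (\<lambda>x y. 1 / (1 - P x y)) (pcomp (\<lambda>_. 1) p)
           \<and> (\<forall>x y. cmod x < r' \<longrightarrow> cmod y < r' \<longrightarrow> cmod (P x y) < 1/2)"
proof -
  have sa: "summable (\<lambda>k. norm ((\<lambda>_. 1::complex) k) * (1/2::real)^k)"
    by (simp add: summable_geometric)
  obtain r' where r': "r' > 0" "r' \<le> r" "rep r' (\<lambda>x y. \<Sum>k. 1 * P x y ^ k) (pcomp (\<lambda>_. 1) p)"
    "\<forall>x y. cmod x < r' \<longrightarrow> cmod y < r' \<longrightarrow> cmod (P x y) < 1/2"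
    using rep_comp[OF R p00 r _ sa] by auto
  have "rep r' (\<lambda>x y. 1 / (1 - P x y)) (pcomp (\<lambda>_. 1) p)"
  proof (rule rep_cong[OF r'(3)])
    fix x y :: complex assume "cmod x < r'" "cmod y < r'"
    then have "cmod (P x y) < 1" using r'(4) by fastforce
    then show "(\<Sum>k. 1 * P x y ^ k) = 1 / (1 - P x y)"
      using suminf_geometric by simp
  qed
  then show ?thesis using r' by blast
qed

lemma lin_from_rep:
  assumes r: "r > 0" and RX: "rep r X c" and RY: "rep r Y d"
    and c: "c 0 0 = 0" "c 1 0 = 1" "c 0 1 = 0"
    and d: "d 0 0 = 0" "d 1 0 = 0" "d 0 1 = 1"
    and DX: "\<And>x y. cmod x < r \<Longrightarrow> cmod y < r \<Longrightarrow>
       ((\<lambda>t. X (x + t * (- y + P x y)) (y + t * (x + Q x y))) has_field_derivative (- Y x y)) (at 0)"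
    and DY: "\<And>x y. cmod x < r \<Longrightarrow> cmod y < r \<Longrightarrow>
       ((\<lambda>t. Y (x + t * (- y + P x y)) (y + t * (x + Q x y))) has_field_derivative (X x y)) (at 0)"
  shows "linearizable P Q"
  unfolding linearizable_def
proof (rule exI[of _ c], rule exI[of _ d], rule exI[of _ r], intro conjI allI impI r c d)
  fix x y :: complex assume xy: "cmod x < r \<and> cmod y < r"
  define v1 where "v1 = - y + P x y"
  define v2 where "v2 = x + Q x y"
  define S where "S = {t. cmod (x + t * v1) < r \<and> cmod (y + t * v2) < r}"
  have oS: "open S" unfolding S_def
    by (intro open_Collect_conj open_Collect_less continuous_intros)
  have S0: "0 \<in> S" using xy by (simp add: S_def)
  have eqX: "X (x + t * v1) (y + t * v2) = dps c (x + t * v1) (y + t * v2)" if "t \<in> S" for t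
    using RX that by (auto simp: rep_def S_def)
  have eqY: "Y (x + t * v1) (y + t * v2) = dps d (x + t * v1) (y + t * v2)" if "t \<in> S" for t
    using RY that by (auto simp: rep_def S_def)
  have sc: "(\<lambda>q. norm (fam c x y q)) summable_on UNIV" "(\<lambda>q. norm (fam d x y q)) summable_on UNIV"
    using RX RY xy by (auto simp: rep_def ps_def)
  show "(\<lambda>(m, n). c m n * x ^ m * y ^ n) summable_on UNIV"
    using abs_summable_summable[OF sc(1)] by (simp add: fam_def)
  show "(\<lambda>(m, n). d m n * x ^ m * y ^ n) summable_on UNIV"
    using abs_summable_summable[OF sc(2)] by (simp add: fam_def)
  have "dps d x y = Y x y" "dps c x y = X x y" using RX RY xy by (auto simp: rep_def)
  then show "((\<lambda>t. dps c (x + t * (- y + P x y)) (y + t * (x + Q x y))) has_field_derivative - dps d x y) (at 0)"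
      "((\<lambda>t. dps d (x + t * (- y + P x y)) (y + t * (x + Q x y))) has_field_derivative dps c x y) (at 0)"
    using has_field_derivative_transform_within_open[OF DX[of x y] oS S0, of "\<lambda>t. dps c (x + t * v1) (y + t * v2)"]
      has_field_derivative_transform_within_open[OF DY[of x y] oS S0, of "\<lambda>t. dps d (x + t * v1) (y + t * v2)"]
      eqX eqY xy by (auto simp: v1_def v2_def)
qed



lemma one_minus_ne: "cmod (w::complex) < 1/2 \<Longrightarrow> 1 - w \<noteq> 0"
  by auto

lemma lie_frac1:
  fixes N D :: "complex \<Rightarrow> complex \<Rightarrow> complex"
  assumes dN: "((\<lambda>t. N (x + t * v1) (y + t * v2)) has_field_derivative LN) (at 0)"
      and dD: "((\<lambda>t. D (x + t * v1) (y + t * v2)) has_field_derivative LD) (at 0)"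
      and D0: "D x y \<noteq> 0"
      and E: "LN * D x y - N x y * LD = M * D x y"
  shows "((\<lambda>t. N (x + t * v1) (y + t * v2) * (1 / D (x + t * v1) (y + t * v2))) has_field_derivative (M * (1 / D x y))) (at 0)"
proof -
  have "((\<lambda>t. N (x + t * v1) (y + t * v2) / D (x + t * v1) (y + t * v2)) has_field_derivative
        (LN * D x y - N x y * LD) / (D x y * D x y)) (at 0)"
    using DERIV_divide[OF dN dD] D0 by simp
  moreover have "(LN * D x y - N x y * LD) / (D x y * D x y) = M * (1 / D x y)"
    using E D0 by (simp add: field_simps)
  ultimately show ?thesis by simp
qed

lemma case2:
  fixes k :: complex
  shows "linearizable (\<lambda>x y. 0) (\<lambda>x y. -3*k*x*y + k^2*x^3)"
proof -
  define pc where "pc = (\<lambda>m n. k * mono2 0 1 m n + (- (k^2)) * mono2 2 0 m n)"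
  have Rp: "rep 1 (\<lambda>x y. k*y - k^2*x^2) pc"
    unfolding pc_def by (rule rep_cong[OF rep_add[OF rep_smult[OF rep_mono2] rep_smult[OF rep_mono2]]]) simp
  have p00: "pc 0 0 = 0" by (simp add: pc_def mono2_def)
  obtain r where r: "r>0" "rep r (\<lambda>x y. 1/(1 - (k*y - k^2*x^2))) (pcomp (\<lambda>_. 1) pc)"
     "\<forall>x y. cmod x < r \<longrightarrow> cmod y < r \<longrightarrow> cmod (k*y - k^2*x^2) < 1/2"
    using rep_geom[OF Rp p00] by auto
  define G where "G = pcomp (\<lambda>_. 1) pc"
  define Nc where "Nc = (\<lambda>m n. mono2 0 1 m n + (-k) * mono2 2 0 m n)"
  have RN: "rep r (\<lambda>x y. y - k*x^2) Nc"
    unfolding Nc_def by (rule rep_cong[OF rep_add[OF rep_mono2 rep_smult[OF rep_mono2]]]) simp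
  have RX: "rep r (\<lambda>x y. x * (1/(1 - (k*y - k^2*x^2)))) (conv (mono2 1 0) G)"
    unfolding G_def by (rule rep_cong[OF rep_conv[OF rep_mono2 r(2)]]) simp
  have RY: "rep r (\<lambda>x y. (y - k*x^2) * (1/(1 - (k*y - k^2*x^2)))) (conv Nc G)"
    unfolding G_def by (rule rep_conv[OF RN r(2)])
  show ?thesis
  proof (rule lin_from_rep[OF r(1) RX RY])
    show "conv (mono2 1 0) G 0 0 = 0" "conv (mono2 1 0) G 1 0 = 1" "conv (mono2 1 0) G 0 1 = 0"
      "conv Nc G 0 0 = 0" "conv Nc G 1 0 = 0" "conv Nc G 0 1 = 1"
      unfolding conv_00 conv_10 conv_01 G_def comp_00 comp_10 comp_01 by (simp_all add: mono2_def Nc_def pc_def)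
  next
    fix x y :: complex assume xy: "cmod x < r" "cmod y < r"
    have "cmod (k*y - k^2*x^2) < 1/2" using r(3) xy by blast
    then have D: "1 - (k*y - k^2*x^2) \<noteq> 0"
      by (rule one_minus_ne)
    define v1 where "v1 = - y + 0"
    define v2 where "v2 = x + (-3*k*x*y + k^2*x^3)"
    have dD: "((\<lambda>t. 1 - (k*(y + t * v2) - k^2*(x + t * v1)^2)) has_field_derivative (- k * v2 + 2*k^2*x * v1)) (at 0)"
      by (auto intro!: derivative_eq_intros simp: algebra_simps)
    have dNx: "((\<lambda>t. x + t * v1) has_field_derivative v1) (at 0)"
      by (auto intro!: derivative_eq_intros)
    have dNy: "((\<lambda>t. (y + t * v2) - k*(x + t * v1)^2) has_field_derivative (v2 - 2*k*x * v1)) (at 0)"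
      by (auto intro!: derivative_eq_intros simp: algebra_simps)
    have "((\<lambda>t. (x + t * v1) * (1 / (1 - (k * (y + t * v2) - k^2 * (x + t * v1)^2)))) has_field_derivative
           (- (y - k*x^2)) * (1/(1 - (k*y - k^2*x^2)))) (at 0)"
      by (rule lie_frac1[where N="\<lambda>a b. a" and D="\<lambda>a b. 1 - (k*b - k^2*a^2)", OF dNx dD D])
         (unfold v1_def v2_def, algebra)
    then show "((\<lambda>t. (x + t * (- y + 0)) * (1 / (1 - (k * (y + t * (x + (-3*k*x*y + k^2*x^3))) - k^2 * (x + t * (- y + 0))^2)))) has_field_derivative
           - ((y - k*x^2) * (1/(1 - (k*y - k^2*x^2))))) (at 0)"
      by (simp only: v1_def v2_def minus_mult_left)
    have "((\<lambda>t. ((y + t * v2) - k * (x + t * v1)^2) * (1 / (1 - (k * (y + t * v2) - k^2 * (x + t * v1)^2)))) has_field_derivative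
           (x * (1/(1 - (k*y - k^2*x^2))))) (at 0)"
      by (rule lie_frac1[where N="\<lambda>a b. b - k*a^2" and D="\<lambda>a b. 1 - (k*b - k^2*a^2)", OF dNy dD D])
         (unfold v1_def v2_def, algebra)
    then show "((\<lambda>t. ((y + t * (x + (-3*k*x*y + k^2*x^3))) - k * (x + t * (- y + 0))^2) * (1 / (1 - (k * (y + t * (x + (-3*k*x*y + k^2*x^3))) - k^2 * (x + t * (- y + 0))^2)))) has_field_derivative
           (x * (1/(1 - (k*y - k^2*x^2))))) (at 0)"
      by (simp only: v1_def v2_def minus_mult_left)
  qed
qed

lemma case3:
  fixes b :: complex
  shows "linearizable (\<lambda>x y. - (4/9) * b^2 * y^3) (\<lambda>x y. b * y^2)"
proof -
  define pc where "pc = (\<lambda>m n. (2*b/3) * mono2 1 0 m n + (2*b^2/9) * mono2 0 2 m n)"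
  have Rp: "rep 1 (\<lambda>x y. (2*b/3)*x + (2*b^2/9)*y^2) pc"
    unfolding pc_def by (rule rep_cong[OF rep_add[OF rep_smult[OF rep_mono2] rep_smult[OF rep_mono2]]]) simp
  have p00: "pc 0 0 = 0" by (simp add: pc_def mono2_def)
  obtain r where r: "r>0" "rep r (\<lambda>x y. 1/(1 - ((2*b/3)*x + (2*b^2/9)*y^2))) (pcomp (\<lambda>_. 1) pc)"
     "\<forall>x y. cmod x < r \<longrightarrow> cmod y < r \<longrightarrow> cmod ((2*b/3)*x + (2*b^2/9)*y^2) < 1/2"
    using rep_geom[OF Rp p00] by auto
  define G where "G = pcomp (\<lambda>_. 1) pc"
  define Nc where "Nc = (\<lambda>m n. mono2 1 0 m n + (b/3) * mono2 0 2 m n)"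
  have RN: "rep r (\<lambda>x y. x + (b/3)*y^2) Nc"
    unfolding Nc_def by (rule rep_cong[OF rep_add[OF rep_mono2 rep_smult[OF rep_mono2]]]) simp
  have RX: "rep r (\<lambda>x y. (x + (b/3)*y^2) * (1/(1 - ((2*b/3)*x + (2*b^2/9)*y^2)))) (conv Nc G)"
    unfolding G_def by (rule rep_conv[OF RN r(2)])
  have RY: "rep r (\<lambda>x y. y * (1/(1 - ((2*b/3)*x + (2*b^2/9)*y^2)))) (conv (mono2 0 1) G)"
    unfolding G_def by (rule rep_cong[OF rep_conv[OF rep_mono2 r(2)]]) simp
  show ?thesis
  proof (rule lin_from_rep[OF r(1) RX RY])
    show "conv Nc G 0 0 = 0" "conv Nc G 1 0 = 1" "conv Nc G 0 1 = 0"
      "conv (mono2 0 1) G 0 0 = 0" "conv (mono2 0 1) G 1 0 = 0" "conv (mono2 0 1) G 0 1 = 1"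
      unfolding conv_00 conv_10 conv_01 G_def comp_00 comp_10 comp_01 by (simp_all add: mono2_def Nc_def pc_def)
  next
    fix x y :: complex assume xy: "cmod x < r" "cmod y < r"
    have "cmod ((2*b/3)*x + (2*b^2/9)*y^2) < 1/2" using r(3) xy by blast
    then have D: "1 - ((2*b/3)*x + (2*b^2/9)*y^2) \<noteq> 0"
      by (rule one_minus_ne)
    define v1 where "v1 = - y + (- (4/9) * b^2 * y^3)"
    define v2 where "v2 = x + b * y^2"
    have dD: "((\<lambda>t. 1 - ((2*b/3)*(x + t * v1) + (2*b^2/9)*(y + t * v2)^2)) has_field_derivative (- (2*b/3) * v1 - (4*b^2/9) * y * v2)) (at 0)"
      by (auto intro!: derivative_eq_intros simp: algebra_simps)
    have dNx: "((\<lambda>t. (x + t * v1) + (b/3)*(y + t * v2)^2) has_field_derivative (v1 + (2*b/3) * y * v2)) (at 0)"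
      by (auto intro!: derivative_eq_intros simp: algebra_simps)
    have dNy: "((\<lambda>t. (y + t * v2)) has_field_derivative v2) (at 0)"
      by (auto intro!: derivative_eq_intros)
    have "((\<lambda>t. ((x + t * v1) + (b/3)*(y + t * v2)^2) * (1/(1 - ((2*b/3)*(x + t * v1) + (2*b^2/9)*(y + t * v2)^2)))) has_field_derivative
           (- y) * (1/(1 - ((2*b/3)*x + (2*b^2/9)*y^2)))) (at 0)"
      by (rule lie_frac1[where N="\<lambda>a c. a + (b/3)*c^2" and D="\<lambda>a c. 1 - ((2*b/3)*a + (2*b^2/9)*c^2)", OF dNx dD D])
         (unfold v1_def v2_def, simp add: field_simps power2_eq_square power3_eq_cube)
    then show "((\<lambda>t. ((x + t * (- y + (- (4/9) * b^2 * y^3))) + (b/3)*(y + t * (x + b * y^2))^2) * (1/(1 - ((2*b/3)*(x + t * (- y + (- (4/9) * b^2 * y^3))) + (2*b^2/9)*(y + t * (x + b * y^2))^2)))) has_field_derivative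
           - (y * (1/(1 - ((2*b/3)*x + (2*b^2/9)*y^2))))) (at 0)"
      by (simp only: v1_def v2_def minus_mult_left)
    have "((\<lambda>t. (y + t * v2) * (1/(1 - ((2*b/3)*(x + t * v1) + (2*b^2/9)*(y + t * v2)^2)))) has_field_derivative
           ((x + (b/3)*y^2) * (1/(1 - ((2*b/3)*x + (2*b^2/9)*y^2))))) (at 0)"
      by (rule lie_frac1[where N="\<lambda>a c. c" and D="\<lambda>a c. 1 - ((2*b/3)*a + (2*b^2/9)*c^2)", OF dNy dD D])
         (unfold v1_def v2_def, simp add: field_simps power2_eq_square power3_eq_cube)
    then show "((\<lambda>t. (y + t * (x + b * y^2)) * (1/(1 - ((2*b/3)*(x + t * (- y + (- (4/9) * b^2 * y^3))) + (2*b^2/9)*(y + t * (x + b * y^2))^2)))) has_field_derivative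
           ((x + (b/3)*y^2) * (1/(1 - ((2*b/3)*x + (2*b^2/9)*y^2))))) (at 0)"
      by (simp only: v1_def v2_def minus_mult_left)
  qed
qed

lemma lie_frac_sq:
  fixes N L :: "complex \<Rightarrow> complex \<Rightarrow> complex"
  assumes dN: "((\<lambda>t. N (x + t * v1) (y + t * v2)) has_field_derivative LN) (at 0)"
      and dL: "((\<lambda>t. L (x + t * v1) (y + t * v2)) has_field_derivative LL) (at 0)"
      and L0: "L x y \<noteq> 0"
      and E: "LN * L x y - 2 * N x y * LL = M * L x y"
  shows "((\<lambda>t. N (x + t * v1) (y + t * v2) * (1 / (L (x + t * v1) (y + t * v2))^2)) has_field_derivative (M * (1 / (L x y)^2))) (at 0)"
proof -
  have dD: "((\<lambda>t. (L (x + t * v1) (y + t * v2))^2) has_field_derivative (2 * L x y * LL)) (at 0)"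
    using DERIV_power[OF dL, of 2] by (simp add: mult_ac)
  have c: "LN * (L x y)^2 - N x y * (2 * L x y * LL) = M * (L x y)^2"
  proof -
    have "LN * (L x y)^2 - N x y * (2 * L x y * LL) = (LN * L x y - 2 * N x y * LL) * L x y"
      by (simp add: algebra_simps power2_eq_square)
    also have "\<dots> = M * (L x y)^2" using E by (simp add: power2_eq_square mult.assoc)
    finally show ?thesis .
  qed
  show ?thesis
    by (rule lie_frac1[where N=N and D="\<lambda>a b. (L a b)^2", OF dN dD _ c]) (simp add: L0)
qed

lemma case4:
  fixes c e :: complex
  assumes rel: "4*e^2 + 25*c^2 = 0"
  shows "linearizable (\<lambda>x y. (3/10)*e*y^2) (\<lambda>x y. c*x^2 + e*x*y - (5/2)*c*y^2)"
proof -
  define pc where "pc = (\<lambda>m n. (-c) * mono2 1 0 m n + (-e/5) * mono2 0 1 m n)"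
  have Rp: "rep 1 (\<lambda>x y. (-c)*x + (-e/5)*y) pc"
    unfolding pc_def by (rule rep_cong[OF rep_add[OF rep_smult[OF rep_mono2] rep_smult[OF rep_mono2]]]) simp
  have p00: "pc 0 0 = 0" by (simp add: pc_def mono2_def)
  obtain r where r: "r>0" "rep r (\<lambda>x y. 1/(1 - ((-c)*x + (-e/5)*y))) (pcomp (\<lambda>_. 1) pc)"
     "\<forall>x y. cmod x < r \<longrightarrow> cmod y < r \<longrightarrow> cmod ((-c)*x + (-e/5)*y) < 1/2"
    using rep_geom[OF Rp p00] by auto
  define G where "G = pcomp (\<lambda>_. 1) pc"
  define NXc where "NXc = (\<lambda>m n. mono2 1 0 m n + ((2/3)*c * mono2 2 0 m n + ((4/15)*e * mono2 1 1 m n + (-(1/6)*c) * mono2 0 2 m n)))"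
  define NYc where "NYc = (\<lambda>m n. mono2 0 1 m n + ((2/15)*e * mono2 2 0 m n + ((-(1/3)*c) * mono2 1 1 m n + (-(1/30)*e) * mono2 0 2 m n)))"
  define NX where "NX = (\<lambda>x y::complex. x + (2/3)*c*x^2 + (4/15)*e*x*y - (1/6)*c*y^2)"
  define NY where "NY = (\<lambda>x y::complex. y + (2/15)*e*x^2 - (1/3)*c*x*y - (1/30)*e*y^2)"
  define L where "L = (\<lambda>x y::complex. 1 + c*x + (e/5)*y)"
  have RNX: "rep r NX NXc"
    unfolding NXc_def by (rule rep_cong[OF rep_add[OF rep_mono2 rep_add[OF rep_smult[OF rep_mono2] rep_add[OF rep_smult[OF rep_mono2] rep_smult[OF rep_mono2]]]]]) (simp add: NX_def algebra_simps)
  have RNY: "rep r NY NYc"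
    unfolding NYc_def by (rule rep_cong[OF rep_add[OF rep_mono2 rep_add[OF rep_smult[OF rep_mono2] rep_add[OF rep_smult[OF rep_mono2] rep_smult[OF rep_mono2]]]]]) (simp add: NY_def algebra_simps)
  have RG: "rep r (\<lambda>x y. 1 / L x y) G"
    unfolding G_def by (rule rep_cong[OF r(2)]) (simp add: L_def algebra_simps)
  have RG2: "rep r (\<lambda>x y. 1 / (L x y)^2) (conv G G)"
    by (rule rep_cong[OF rep_conv[OF RG RG]]) (simp add: power2_eq_square)
  have RX: "rep r (\<lambda>x y. NX x y * (1 / (L x y)^2)) (conv NXc (conv G G))"
    by (rule rep_conv[OF RNX RG2])
  have RY: "rep r (\<lambda>x y. NY x y * (1 / (L x y)^2)) (conv NYc (conv G G))"
    by (rule rep_conv[OF RNY RG2])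
  show ?thesis
  proof (rule lin_from_rep[OF r(1) RX RY])
    show "conv NXc (conv G G) 0 0 = 0" "conv NXc (conv G G) 1 0 = 1" "conv NXc (conv G G) 0 1 = 0"
      "conv NYc (conv G G) 0 0 = 0" "conv NYc (conv G G) 1 0 = 0" "conv NYc (conv G G) 0 1 = 1"
      unfolding conv_00 conv_10 conv_01 G_def comp_00 comp_10 comp_01 by (simp_all add: mono2_def NXc_def NYc_def pc_def)
  next
    fix x y :: complex assume xy: "cmod x < r" "cmod y < r"
    have "cmod ((-c)*x + (-e/5)*y) < 1/2" using r(3) xy by blast
    then have "1 - ((-c)*x + (-e/5)*y) \<noteq> 0"
      by (rule one_minus_ne)
    then have L0: "L x y \<noteq> 0" by (simp add: L_def algebra_simps)
    define v1 where "v1 = - y + (3/10)*e*y^2"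
    define v2 where "v2 = x + (c*x^2 + e*x*y - (5/2)*c*y^2)"
    have dL: "((\<lambda>t. L (x + t * v1) (y + t * v2)) has_field_derivative (c * v1 + (e/5) * v2)) (at 0)"
      unfolding L_def by (auto intro!: derivative_eq_intros simp: algebra_simps)
    have dNX: "((\<lambda>t. NX (x + t * v1) (y + t * v2)) has_field_derivative
        (v1 + (4/3)*c*x * v1 + (4/15)*e*(v1*y + x * v2) - (1/3)*c*y * v2)) (at 0)"
      unfolding NX_def by (auto intro!: derivative_eq_intros simp: algebra_simps)
    have dNY: "((\<lambda>t. NY (x + t * v1) (y + t * v2)) has_field_derivative
        (v2 + (4/15)*e*x * v1 - (1/3)*c*(v1*y + x * v2) - (1/15)*e*y * v2)) (at 0)"
      unfolding NY_def by (auto intro!: derivative_eq_intros simp: algebra_simps)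
    define q1 where "q1 = (1/250)*y^4*e - (1/75)*x^2*y^2*e + (1/50)*y^3 + (1/30)*x*y^3*c - (1/25)*x^2*y - (1/75)*x^3*y*c"
    define q2 where "q2 = (1/250)*x*y^3*e - (1/75)*x^3*y*e - (11/150)*x*y^2 + (1/30)*x^2*y^2*c - (1/75)*x^3 - (1/75)*x^4*c"
    have E1: "(v1 + (4/3)*c*x * v1 + (4/15)*e*(v1*y + x * v2) - (1/3)*c*y * v2) * L x y - 2 * NX x y * (c * v1 + (e/5) * v2)
        + NY x y * L x y = (4*e^2 + 25*c^2) * q1"
      unfolding v1_def v2_def NX_def NY_def L_def q1_def by (simp add: field_simps eval_nat_numeral)
    have E2: "(v2 + (4/15)*e*x * v1 - (1/3)*c*(v1*y + x * v2) - (1/15)*e*y * v2) * L x y - 2 * NY x y * (c * v1 + (e/5) * v2)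
        - NX x y * L x y = (4*e^2 + 25*c^2) * q2"
      unfolding v1_def v2_def NX_def NY_def L_def q2_def by (simp add: field_simps eval_nat_numeral)
    have "((\<lambda>t. NX (x + t * v1) (y + t * v2) * (1 / (L (x + t * v1) (y + t * v2))^2)) has_field_derivative
           ((- NY x y) * (1 / (L x y)^2))) (at 0)"
    proof (rule lie_frac_sq[where N=NX and L=L, OF dNX dL L0])
      have "(v1 + (4/3)*c*x * v1 + (4/15)*e*(v1*y + x * v2) - (1/3)*c*y * v2) * L x y - 2 * NX x y * (c * v1 + (e/5) * v2)
        + NY x y * L x y = 0" using E1 rel by simp
      then show "(v1 + (4/3)*c*x * v1 + (4/15)*e*(v1*y + x * v2) - (1/3)*c*y * v2) * L x y - 2 * NX x y * (c * v1 + (e/5) * v2)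
        = (- NY x y) * L x y" by (simp add: eq_neg_iff_add_eq_0)
    qed
    then show "((\<lambda>t. NX (x + t * (- y + (3/10)*e*y^2)) (y + t * (x + (c*x^2 + e*x*y - (5/2)*c*y^2))) * (1 / (L (x + t * (- y + (3/10)*e*y^2)) (y + t * (x + (c*x^2 + e*x*y - (5/2)*c*y^2))))^2)) has_field_derivative
           - (NY x y * (1 / (L x y)^2))) (at 0)"
      by (simp only: v1_def v2_def minus_mult_left)
    have "((\<lambda>t. NY (x + t * v1) (y + t * v2) * (1 / (L (x + t * v1) (y + t * v2))^2)) has_field_derivative
           (NX x y * (1 / (L x y)^2))) (at 0)"
    proof (rule lie_frac_sq[where N=NY and L=L, OF dNY dL L0])
      have "(v2 + (4/15)*e*x * v1 - (1/3)*c*(v1*y + x * v2) - (1/15)*e*y * v2) * L x y - 2 * NY x y * (c * v1 + (e/5) * v2)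
        - NX x y * L x y = 0" using E2 rel by simp
      then show "(v2 + (4/15)*e*x * v1 - (1/3)*c*(v1*y + x * v2) - (1/15)*e*y * v2) * L x y - 2 * NY x y * (c * v1 + (e/5) * v2)
        = NX x y * L x y" by simp
    qed
    then show "((\<lambda>t. NY (x + t * (- y + (3/10)*e*y^2)) (y + t * (x + (c*x^2 + e*x*y - (5/2)*c*y^2))) * (1 / (L (x + t * (- y + (3/10)*e*y^2)) (y + t * (x + (c*x^2 + e*x*y - (5/2)*c*y^2))))^2)) has_field_derivative
           (NX x y * (1 / (L x y)^2))) (at 0)"
      by (simp only: v1_def v2_def minus_mult_left)
  qed
qed



definition acoef :: "complex \<Rightarrow> nat \<Rightarrow> complex" where
  "acoef b k = (if 2 \<le> k then 2 * (-1)^k * b^(k-1) / (of_nat k * of_nat (k+1)) else 0)"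

definition phi :: "complex \<Rightarrow> complex \<Rightarrow> complex" where
  "phi b u = (\<Sum>k. acoef b k * u^k)"

definition rho :: "complex \<Rightarrow> real" where
  "rho b = 1 / (2 * (norm b + 1))"

lemma rho_pos: "rho b > 0"
  unfolding rho_def using norm_ge_zero[of b] by (intro divide_pos_pos) (auto, smt (verit) norm_ge_zero)

lemma acoef_bound: "norm (acoef b k) \<le> (norm b + 1)^k"
proof (cases "2 \<le> k")
  case False then show ?thesis by (simp add: acoef_def)
next
  case True
  have kk: "(6::real) \<le> real k * real (k+1)"
  proof -
    have "(2::real) \<le> real k" using True by simp
    moreover have "(3::real) \<le> real (k+1)" using True by simp
    ultimately show ?thesis using mult_mono[of 2 "real k" 3 "real (k+1)"] by simp
  qed
  have nk: "norm (of_nat k * of_nat (k+1) :: complex) = real k * real (k+1)"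
    by (simp only: norm_mult norm_of_nat)
  have "norm (acoef b k) = 2 * norm b^(k-1) / norm (of_nat k * of_nat (k+1) :: complex)"
    using True unfolding acoef_def by (simp add: norm_mult norm_divide norm_power del: of_nat_add of_nat_Suc)
  also have "\<dots> = 2 * norm b^(k-1) / (real k * real (k+1))" by (simp only: nk)
  also have "\<dots> \<le> norm b^(k-1)"
  proof -
    have "2 * norm b^(k-1) \<le> 6 * norm b^(k-1)" by simp
    also have "\<dots> \<le> (real k * real (k+1)) * norm b^(k-1)" using kk by (intro mult_right_mono) auto
    finally have "2 * norm b^(k-1) \<le> norm b^(k-1) * (real k * real (k+1))" by (simp add: mult_ac)
    moreover have "real k * real (k+1) > 0" using True by simp
    ultimately show ?thesis by (simp add: divide_le_eq)
  qed
  also have "\<dots> \<le> (norm b + 1)^(k-1)" by (intro power_mono) auto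
  also have "\<dots> \<le> (norm b + 1)^k" by (intro power_increasing) auto
  finally show ?thesis .
qed

lemma acoef_abs: "norm (acoef b k) * rho b ^ k \<le> (1/2)^k"
proof -
  have h: "(norm b + 1) * rho b = 1/2"
    unfolding rho_def using norm_ge_zero[of b] by (simp add: field_simps) (smt (verit) norm_ge_zero)
  have "norm (acoef b k) * rho b ^ k \<le> (norm b + 1)^k * rho b ^ k"
    using rho_pos[of b] by (intro mult_right_mono acoef_bound) auto
  also have "\<dots> = ((norm b + 1) * rho b)^k" by (simp add: power_mult_distrib)
  finally show ?thesis by (simp add: h)
qed

lemma acoef_summable: "summable (\<lambda>k. norm (acoef b k) * rho b ^ k)"
proof (rule summable_comparison_test'[of "\<lambda>k. (1/2::real)^k" 0])
  show "summable (\<lambda>k. (1/2::real)^k)" by (simp add: summable_geometric)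
  fix n :: nat
  have "0 \<le> norm (acoef b n) * rho b ^ n" using rho_pos[of b] by simp
  then show "norm (norm (acoef b n) * rho b ^ n) \<le> (1/2)^n" using acoef_abs[of b n] by simp
qed

lemma acoef_summable_z: "norm z < rho b \<Longrightarrow> summable (\<lambda>k. acoef b k * z^k)"
proof -
  assume z: "norm z < rho b"
  have "summable (\<lambda>k. norm (acoef b k * z^k))"
  proof (rule summable_comparison_test'[OF acoef_summable[of b]])
    fix n
    have "norm (acoef b n * z^n) = norm (acoef b n) * norm z ^ n" by (simp add: norm_mult norm_power)
    also have "\<dots> \<le> norm (acoef b n) * rho b ^ n"
      using z by (intro mult_left_mono power_mono) auto
    finally show "norm (norm (acoef b n * z^n)) \<le> norm (acoef b n) * rho b ^ n" by simp
  qed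
  then show ?thesis by (rule summable_norm_cancel)
qed

lemma phi_deriv: "norm u < rho b \<Longrightarrow> (phi b has_field_derivative (\<Sum>n. diffs (acoef b) n * u^n)) (at u)"
  unfolding phi_def[abs_def] by (rule termdiffs_strong'[where K="rho b"]) (auto intro: acoef_summable_z)

lemma acoef_rec: "of_nat (k+1) * acoef b k + (if 1 \<le> k then b * of_nat (k-1) * acoef b (k-1) else 0)
   = (if k = 2 then b else 0)"
proof -
  consider "k = 0" | "k = 1" | "k = 2" | "3 \<le> k" by linarith
  then show ?thesis
  proof cases
    case 4
    define n where "n = k - 1"
    have kn: "k = Suc n" "2 \<le> n" using 4 by (auto simp: n_def)
    have nz: "(of_nat k :: complex) \<noteq> 0" "(of_nat (Suc k) :: complex) \<noteq> 0" "(of_nat n :: complex) \<noteq> 0"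
      using 4 kn by (simp_all only: of_nat_eq_0_iff)
    have A: "of_nat (Suc k) * acoef b k = 2 * (-1)^k * b^n / of_nat k"
      using 4 nz unfolding acoef_def n_def by (simp del: of_nat_Suc add: field_simps)
    have B: "b * of_nat n * acoef b n = - (2 * (-1)^k * b^n / of_nat k)"
    proof -
      have "acoef b n = 2 * (-1)^n * b^(n-1) / (of_nat n * of_nat k)"
        using kn unfolding acoef_def by (simp del: of_nat_Suc)
      moreover have "b * b^(n-1) = b^n" using kn by (simp add: power_eq_if)
      moreover have "(-1::complex)^k = - ((-1)^n)" using kn by simp
      ultimately show ?thesis using nz by (simp del: of_nat_Suc add: field_simps)
    qed
    have kn1: "k - 1 = n" using kn by simp
    have "of_nat (k+1) * acoef b k + (if 1 \<le> k then b * of_nat (k-1) * acoef b (k-1) else 0)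
        = of_nat (Suc k) * acoef b k + b * of_nat n * acoef b n"
      using 4 by (simp only: kn1 Suc_eq_plus1 if_True) (simp del: of_nat_Suc)
    then show ?thesis using A B 4 by simp
  qed (auto simp: acoef_def field_simps)
qed

lemma phi_ode:
  assumes u: "norm u < rho b"
  shows "u * (1 + b*u) * (\<Sum>n. diffs (acoef b) n * u^n) + phi b u = b * u^2"
proof -
  define a where "a = acoef b"
  define D where "D = (\<Sum>n. diffs a n * u^n)"
  have sD: "summable (\<lambda>n. diffs a n * u^n)"
    unfolding a_def by (rule termdiff_converges[OF u]) (rule acoef_summable_z)
  have sphi: "(\<lambda>k. a k * u^k) sums phi b u"
    unfolding a_def phi_def using acoef_summable_z[OF u] by (simp add: summable_sums)
  have s1: "(\<lambda>n. u * (diffs a n * u^n)) sums (u * D)"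
    using sums_mult[OF summable_sums[OF sD], of u] by (simp add: D_def)
  have s1': "(\<lambda>k. of_nat k * a k * u^k) sums (u * D)"
  proof -
    have "(\<lambda>n. (\<lambda>k. of_nat k * a k * u^k) (Suc n)) sums (u * D)"
      using s1 by (simp add: diffs_def algebra_simps)
    then show ?thesis by (subst (asm) sums_Suc_iff) simp
  qed
  have s2: "(\<lambda>n. b * u^2 * (diffs a n * u^n)) sums (b * u^2 * D)"
    using sums_mult[OF summable_sums[OF sD], of "b * u^2"] by (simp add: D_def)
  define g where "g = (\<lambda>k. (if 1 \<le> k then b * of_nat (k-1) * a (k-1) else 0) * u^k)"
  have s2': "g sums (b * u^2 * D)"
  proof -
    have "(\<lambda>n. g (Suc (Suc n))) sums (b * u^2 * D)"
      using s2 by (simp add: g_def diffs_def algebra_simps power2_eq_square)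
    then have "(\<lambda>n. g (Suc n)) sums (b * u^2 * D + g (Suc 0))" by (subst (asm) sums_Suc_iff) simp
    then have "g sums (b * u^2 * D + g (Suc 0) + g 0)" by (subst (asm) sums_Suc_iff) simp
    then show ?thesis by (simp add: g_def a_def acoef_def)
  qed
  have "(\<lambda>k. a k * u^k + of_nat k * a k * u^k + g k) sums (phi b u + u * D + b * u^2 * D)"
    by (intro sums_add sphi s1' s2')
  moreover have "(\<lambda>k. a k * u^k + of_nat k * a k * u^k + g k) = (\<lambda>k. if k = 2 then b * u^2 else 0)"
  proof
    fix k
    have "a k * u^k + of_nat k * a k * u^k + g k
        = (of_nat (k+1) * acoef b k + (if 1 \<le> k then b * of_nat (k-1) * acoef b (k-1) else 0)) * u^k"
      by (simp add: g_def a_def algebra_simps)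
    also have "\<dots> = (if k = 2 then b else 0) * u^k" by (simp only: acoef_rec)
    also have "\<dots> = (if k = 2 then b * u^2 else 0)" by auto
    finally show "a k * u^k + of_nat k * a k * u^k + g k = (if k = 2 then b * u^2 else 0)" .
  qed
  ultimately have "(\<lambda>k. if k = 2 then b * u^2 else 0) sums (phi b u + u * D + b * u^2 * D)" by simp
  moreover have "(\<lambda>k. if k = 2 then b * u^2 else 0) sums (b * u^2)"
    using sums_single[of 2 "\<lambda>_. b * u^2"] by simp
  ultimately have "phi b u + u * D + b * u^2 * D = b * u^2" using sums_unique2 by blast
  then show ?thesis by (simp add: D_def a_def algebra_simps power2_eq_square)
qed


lemma case1:
  fixes b j :: complex
  assumes j: "j^2 = -1"
  shows "linearizable (\<lambda>x y. 0) (\<lambda>x y. b*x^2 + 2*j*b*x*y - b*y^2)"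
proof -
  define zc where "zc = (\<lambda>m n. mono2 1 0 m n + j * mono2 0 1 m n)"
  define wc where "wc = (\<lambda>m n. mono2 1 0 m n + (-j) * mono2 0 1 m n)"
  have Rz: "rep 1 (\<lambda>x y. x + j*y) zc"
    unfolding zc_def by (rule rep_cong[OF rep_add[OF rep_mono2 rep_smult[OF rep_mono2]]]) simp
  have Rw: "rep 1 (\<lambda>x y. x - j*y) wc"
    unfolding wc_def by (rule rep_cong[OF rep_add[OF rep_mono2 rep_smult[OF rep_mono2]]]) simp
  define pc where "pc = (\<lambda>m n. (-b) * zc m n)"
  have Rp: "rep 1 (\<lambda>x y. (-b) * (x + j*y)) pc"
    unfolding pc_def by (rule rep_smult[OF Rz])
  have z00: "zc 0 0 = 0" by (simp add: zc_def mono2_def)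
  have p00: "pc 0 0 = 0" by (simp add: pc_def z00)
  obtain r1 where r1: "r1>0" "rep r1 (\<lambda>x y. 1/(1 - (-b) * (x + j*y))) (pcomp (\<lambda>_. 1) pc)"
     "\<forall>x y. cmod x < r1 \<longrightarrow> cmod y < r1 \<longrightarrow> cmod ((-b) * (x + j*y)) < 1/2"
    using rep_geom[OF Rp p00] by auto
  obtain r2 where r2: "r2>0" "rep r2 (\<lambda>x y. \<Sum>k. acoef b k * (x + j*y)^k) (pcomp (acoef b) zc)"
     "\<forall>x y. cmod x < r2 \<longrightarrow> cmod y < r2 \<longrightarrow> cmod (x + j*y) < rho b"
    using rep_comp[OF Rz z00 _ rho_pos[of b] acoef_summable[of b]] by auto
  define r where "r = min (min r1 r2) 1"
  have r: "r > 0" "r \<le> r1" "r \<le> r2" "r \<le> 1" using r1 r2 by (auto simp: r_def)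
  define G where "G = pcomp (\<lambda>_. 1) pc"
  define Fc where "Fc = pcomp (acoef b) zc"
  define Zf where "Zf = (\<lambda>x y. (x + j*y) * (1 / (1 + b * (x + j*y))))"
  define Of where "Of = (\<lambda>x y. (x - j*y) + phi b (x + j*y))"
  define Zc where "Zc = conv zc G"
  define Oc where "Oc = (\<lambda>m n. wc m n + Fc m n)"
  have RZ: "rep r Zf Zc"
    unfolding Zc_def G_def
    by (rule rep_cong[OF rep_conv[OF rep_shrink[OF Rz r(4)] rep_shrink[OF r1(2) r(2)]]]) (simp add: Zf_def)
  have RO: "rep r Of Oc"
    unfolding Oc_def Fc_def
    by (rule rep_cong[OF rep_add[OF rep_shrink[OF Rw r(4)] rep_shrink[OF r2(2) r(3)]]]) (simp add: Of_def phi_def)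
  define Xf where "Xf = (\<lambda>x y. (1/2) * Zf x y + (1/2) * Of x y)"
  define Yf where "Yf = (\<lambda>x y. (-j/2) * Zf x y + (j/2) * Of x y)"
  have RX: "rep r Xf (\<lambda>m n. (1/2) * Zc m n + (1/2) * Oc m n)"
    unfolding Xf_def by (rule rep_add[OF rep_smult[OF RZ] rep_smult[OF RO]])
  have RY: "rep r Yf (\<lambda>m n. (-j/2) * Zc m n + (j/2) * Oc m n)"
    unfolding Yf_def by (rule rep_add[OF rep_smult[OF RZ] rep_smult[OF RO]])
  have cZ: "Zc 0 0 = 0" "Zc 1 0 = 1" "Zc 0 1 = j"
    unfolding Zc_def conv_00 conv_10 conv_01 G_def comp_00 comp_10 comp_01 by (simp_all add: mono2_def zc_def pc_def)
  have cO: "Oc 0 0 = 0" "Oc 1 0 = 1" "Oc 0 1 = -j"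
    unfolding Oc_def Fc_def comp_00 comp_10 comp_01 by (simp_all add: mono2_def zc_def wc_def acoef_def)
  show ?thesis
  proof (rule lin_from_rep[OF r(1) RX RY])
    show "(1/2) * Zc 0 0 + (1/2) * Oc 0 0 = 0" "(1/2) * Zc 1 0 + (1/2) * Oc 1 0 = 1"
      "(1/2) * Zc 0 1 + (1/2) * Oc 0 1 = 0"
      "(-j/2) * Zc 0 0 + (j/2) * Oc 0 0 = 0" "(-j/2) * Zc 1 0 + (j/2) * Oc 1 0 = 0"
      "(-j/2) * Zc 0 1 + (j/2) * Oc 0 1 = 1"
      using cZ cO j by (simp_all add: field_simps power2_eq_square)
  next
    fix x y :: complex assume xy: "cmod x < r" "cmod y < r"
    define v1 where "v1 = - y + 0"
    define v2 where "v2 = x + (b*x^2 + 2*j*b*x*y - b*y^2)"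
    define z where "z = x + j*y"
    have zr: "cmod z < rho b" using r2(3) xy r unfolding z_def by force
    have "cmod ((-b) * z) < 1/2" using r1(3) xy r unfolding z_def by force
    then have "1 - (-b) * z \<noteq> 0" by (rule one_minus_ne)
    then have D0: "1 + b * z \<noteq> 0" by simp
    have Lz: "v1 + j * v2 = j * z * (1 + b * z)"
      unfolding v1_def v2_def z_def using j by algebra
    have dz: "((\<lambda>t. (x + t * v1) + j * (y + t * v2)) has_field_derivative (v1 + j * v2)) (at 0)"
      by (auto intro!: derivative_eq_intros)
    have dD: "((\<lambda>t. 1 + b * ((x + t * v1) + j * (y + t * v2))) has_field_derivative (b * (v1 + j * v2))) (at 0)"
      by (auto intro!: derivative_eq_intros)
    have dZ: "((\<lambda>t. Zf (x + t * v1) (y + t * v2)) has_field_derivative (j * z * (1 / (1 + b * z)))) (at 0)"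
    proof -
      have "((\<lambda>t. ((x + t * v1) + j * (y + t * v2)) * (1 / (1 + b * ((x + t * v1) + j * (y + t * v2))))) has_field_derivative ((j * z) * (1 / (1 + b * (x + j * y))))) (at 0)"
        by (rule lie_frac1[where N="\<lambda>a c. a + j * c" and D="\<lambda>a c. 1 + b * (a + j * c)", OF dz dD])
           (use D0 Lz in \<open>simp_all add: z_def algebra_simps\<close>)
      then show ?thesis by (simp add: Zf_def z_def)
    qed
    define dphi where "dphi = (\<Sum>n. diffs (acoef b) n * z^n)"
    have ode: "z * (1 + b*z) * dphi + phi b z = b * z^2"
      unfolding dphi_def by (rule phi_ode[OF zr])
    have dph: "((\<lambda>t. phi b ((x + t * v1) + j * (y + t * v2))) has_field_derivative (dphi * (v1 + j * v2))) (at 0)"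
    proof -
      have pd: "(phi b has_field_derivative dphi) (at ((\<lambda>t. (x + t * v1) + j * (y + t * v2)) 0))"
        using phi_deriv[OF zr] by (simp add: z_def dphi_def)
      show ?thesis using DERIV_chain2[OF pd dz] by simp
    qed
    have dO0: "((\<lambda>t. ((x + t * v1) - j * (y + t * v2)) + phi b ((x + t * v1) + j * (y + t * v2))) has_field_derivative
        ((v1 - j * v2) + dphi * (v1 + j * v2))) (at 0)"
      by (rule derivative_eq_intros dph refl | simp)+
    have LO: "(v1 - j * v2) + dphi * (v1 + j * v2) = - j * Of x y"
    proof -
      have "dphi * (v1 + j * v2) = j * (z * (1 + b*z) * dphi)" using Lz by (simp add: algebra_simps)
      also have "\<dots> = j * (b * z^2 - phi b z)"
      proof -
        have "z * (1 + b*z) * dphi = b * z^2 - phi b z" using ode by (simp add: eq_diff_eq)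
        then show ?thesis by simp
      qed
      finally have 1: "dphi * (v1 + j * v2) = j * (b * z^2 - phi b z)" .
      have 2: "v1 - j * v2 = - j * (x - j*y) - j * b * z^2"
        unfolding v1_def v2_def z_def using j by algebra
      show ?thesis using 1 2 by (simp add: Of_def z_def algebra_simps)
    qed
    have dO: "((\<lambda>t. Of (x + t * v1) (y + t * v2)) has_field_derivative (- j * Of x y)) (at 0)"
      using dO0 LO by (simp add: Of_def)
    have ZZ: "Zf x y = z * (1 / (1 + b * z))" by (simp add: Zf_def z_def)
    have dX: "((\<lambda>t. Xf (x + t * v1) (y + t * v2)) has_field_derivative - Yf x y) (at 0)"
    proof -
      have "((\<lambda>t. Xf (x + t * v1) (y + t * v2)) has_field_derivative (1/2) * (j * z * (1 / (1 + b * z))) + (1/2) * (- j * Of x y)) (at 0)"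
        unfolding Xf_def by (rule derivative_eq_intros dZ dO refl | simp add: algebra_simps)+
      moreover have "(1/2) * (j * z * (1 / (1 + b * z))) + (1/2) * (- j * Of x y) = - Yf x y"
        unfolding Yf_def ZZ by (simp add: algebra_simps)
      ultimately show ?thesis by simp
    qed
    have dY: "((\<lambda>t. Yf (x + t * v1) (y + t * v2)) has_field_derivative Xf x y) (at 0)"
    proof -
      have "((\<lambda>t. Yf (x + t * v1) (y + t * v2)) has_field_derivative (-j/2) * (j * z * (1 / (1 + b * z))) + (j/2) * (- j * Of x y)) (at 0)"
        unfolding Yf_def by (rule derivative_eq_intros dZ dO refl | simp add: algebra_simps)+
      moreover have "(-j/2) * (j * z * (1 / (1 + b * z))) + (j/2) * (- j * Of x y) = Xf x y"
      proof -
        have gen: "(-j/2) * (j * z * w) + (j/2) * (- j * q) = (1/2) * (z * w) + (1/2) * q" for w q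
          using j by algebra
        show ?thesis unfolding Xf_def ZZ by (rule gen)
      qed
      ultimately show ?thesis by simp
    qed
    show "((\<lambda>t. Xf (x + t * (- y + 0)) (y + t * (x + (b*x^2 + 2*j*b*x*y - b*y^2)))) has_field_derivative - Yf x y) (at 0)"
      using dX by (simp add: v1_def v2_def)
    show "((\<lambda>t. Yf (x + t * (- y + 0)) (y + t * (x + (b*x^2 + 2*j*b*x*y - b*y^2)))) has_field_derivative Xf x y) (at 0)"
      using dY by (simp add: v1_def v2_def)
  qed
qed


lemma linearizable_cong:
  assumes "\<And>x y. P x y = P' x y" "\<And>x y. Q x y = Q' x y" "linearizable P' Q'"
  shows "linearizable P Q"
proof -
  have "P = P'" "Q = Q'" using assms(1,2) by (auto intro!: ext)
  then show ?thesis using assms(3) by simp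
qed

lemma L2: fixes b11 b30 b20 b02 b21 b12 a02 a03 x y :: complex
  assumes h: "b12 = 0" "a02 = 0" "b20 = 0" "b02 = 0" "b21 = 0" "a03 = 0" "9 * b30 - b11^2 = 0"
  shows "b20 * x^2 + b11 * x * y + b02 * y^2 + b30 * x^3 + b21 * x^2 * y + b12 * x * y^2 = -3*(-b11/3)*x*y + (-b11/3)^2*x^3"
proof -
  define k where "k = -b11/3"
  have bk: "b11 = -3*k" by (simp add: k_def)
  have "9 * b30 = b11^2" using h(7) by (simp only: right_minus_eq)
  then have "9 * b30 = 9 * k^2" by (simp add: bk power_mult_distrib)
  then have b30: "b30 = k^2" by simp
  show ?thesis unfolding k_def[symmetric] by (simp add: h(1-6) bk b30)
qed
lemma L3: fixes a03 b02 :: complex assumes "9 * a03 + 4 * b02^2 = 0" shows "a03 = - (4/9) * b02^2"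
proof -
  have "9 * a03 = - (4 * b02^2)" using assms by (simp only: eq_neg_iff_add_eq_0)
  then have "9 * a03 = 9 * (- (4/9) * b02^2)" by simp
  then show ?thesis by (simp only: mult_cancel_left) simp
qed
lemma L4: fixes a02 b11 b02 b20 :: complex assumes "2 * b02 + 5 * b20 = 0" "10 * a02 - 3 * b11 = 0"
  shows "b02 = - (5/2) * b20" "a02 = (3/10) * b11"
proof -
  have "2 * b02 = - (5 * b20)" using assms(1) by (simp only: eq_neg_iff_add_eq_0)
  then have "2 * b02 = 2 * (- (5/2) * b20)" by simp
  then show "b02 = - (5/2) * b20" by (simp only: mult_cancel_left) simp
  have "10 * a02 = 3 * b11" using assms(2) by (simp only: right_minus_eq)
  then have "10 * a02 = 10 * ((3/10) * b11)" by simp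
  then show "a02 = (3/10) * b11" by (simp only: mult_cancel_left) simp
qed
lemma L4q: fixes a02 b11 b02 b20 b30 b21 b12 a03 x y :: complex
  assumes h: "b12 = 0" "b30 = 0" "b21 = 0" "a03 = 0" and b02: "b02 = - (5/2) * b20" and a02: "a02 = (3/10) * b11"
  shows "a02 * y^2 + a03 * y^3 = (3/10)*b11*y^2"
    "b20 * x^2 + b11 * x * y + b02 * y^2 + b30 * x^3 + b21 * x^2 * y + b12 * x * y^2 = b20*x^2 + b11*x*y - (5/2)*b20*y^2"
  by (simp_all add: h b02 a02)
lemma L1q: fixes a02 b11 b02 b20 b30 b21 b12 a03 x y j :: complex
  assumes h: "b12 = 0" "a02 = 0" "b30 = 0" "b21 = 0" "a03 = 0" and b02: "b02 = - b20" and j: "b11 = 2 * j * b20"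
  shows "b20 * x^2 + b11 * x * y + b02 * y^2 + b30 * x^3 + b21 * x^2 * y + b12 * x * y^2 = b20*x^2 + 2*j*b20*x*y - b20*y^2"
  by (simp add: h b02 j)
lemma L3q: fixes a02 b11 b02 b20 b30 b21 b12 a03 x y j :: complex
  assumes h: "b12 = 0" "a02 = 0" "b11 = 0" "b20 = 0" "b30 = 0" "b21 = 0" and a03: "a03 = - (4/9) * b02^2"
  shows "a02 * y^2 + a03 * y^3 = - (4/9) * b02^2 * y^3"
    "b20 * x^2 + b11 * x * y + b02 * y^2 + b30 * x^3 + b21 * x^2 * y + b12 * x * y^2 = b02 * y^2"
  by (simp_all add: h a03)

theorem theorem1:
  fixes a02 a03 b20 b11 b02 b30 b21 b12 :: complex
  assumes "(b12 = 0 \<and> a02 = 0 \<and> b30 = 0 \<and> b21 = 0 \<and> a03 = 0 \<and> b02 + b20 = 0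
              \<and> b11^2 + 4 * b20^2 = 0)
         \<or> (b12 = 0 \<and> a02 = 0 \<and> b20 = 0 \<and> b02 = 0 \<and> b21 = 0 \<and> a03 = 0
              \<and> 9 * b30 - b11^2 = 0)
         \<or> (b12 = 0 \<and> a02 = 0 \<and> b11 = 0 \<and> b20 = 0 \<and> b30 = 0 \<and> b21 = 0
              \<and> 9 * a03 + 4 * b02^2 = 0)
         \<or> (b12 = 0 \<and> b30 = 0 \<and> b21 = 0 \<and> a03 = 0 \<and> 2 * b02 + 5 * b20 = 0
              \<and> 10 * a02 - 3 * b11 = 0 \<and> 4 * b11^2 + 25 * b20^2 = 0)"
  shows "linearizable
           (\<lambda>x y. a02 * y^2 + a03 * y^3)
           (\<lambda>x y. b20 * x^2 + b11 * x * y + b02 * y^2 + b30 * x^3 + b21 * x^2 * y + b12 * x * y^2)"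
  using assms
proof (elim disjE conjE)
  assume h: "b12 = 0" "a02 = 0" "b30 = 0" "b21 = 0" "a03 = 0" "b02 + b20 = 0" "b11^2 + 4 * b20^2 = 0"
  obtain j where j: "j^2 = -1" "b11 = 2 * j * b20"
  proof (cases "b20 = 0")
    case True
    then have "b11 = 0" using h(7) by simp
    then show ?thesis using that[of \<i>] True by simp
  next
    case False
    have hb: "b11^2 = - (4 * b20^2)" using h(7) by (simp only: eq_neg_iff_add_eq_0)
    have "(b11 / (2 * b20))^2 = b11^2 / (4 * b20^2)" by (simp add: power_divide power_mult_distrib)
    also have "\<dots> = -1" using hb False by simp
    finally have "(b11 / (2 * b20))^2 = -1" .
    moreover have "b11 = 2 * (b11 / (2 * b20)) * b20" using False by simp
    ultimately show ?thesis using that by blast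
  qed
  have b02: "b02 = - b20" using h(6) by (simp only: eq_neg_iff_add_eq_0)
  show ?thesis
  proof (rule linearizable_cong[OF _ _ case1[of j b20, OF j(1)]])
    show "a02 * y^2 + a03 * y^3 = 0" for x y :: complex by (simp add: h)
    show "b20 * x^2 + b11 * x * y + b02 * y^2 + b30 * x^3 + b21 * x^2 * y + b12 * x * y^2 = b20*x^2 + 2*j*b20*x*y - b20*y^2"
      for x y :: complex by (rule L1q[OF h(1-5) b02 j(2)])
  qed
next
  assume h: "b12 = 0" "a02 = 0" "b20 = 0" "b02 = 0" "b21 = 0" "a03 = 0" "9 * b30 - b11^2 = 0"
  show ?thesis
  proof (rule linearizable_cong[OF _ _ case2[of "-b11/3"]])
    show "a02 * y^2 + a03 * y^3 = 0" for x y :: complex by (simp add: h)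
    show "b20 * x^2 + b11 * x * y + b02 * y^2 + b30 * x^3 + b21 * x^2 * y + b12 * x * y^2 = -3*(-b11/3)*x*y + (-b11/3)^2*x^3"
      for x y :: complex by (rule L2[OF h])
  qed
next
  assume h: "b12 = 0" "a02 = 0" "b11 = 0" "b20 = 0" "b30 = 0" "b21 = 0" "9 * a03 + 4 * b02^2 = 0"
  have a03: "a03 = - (4/9) * b02^2" by (rule L3[OF h(7)])
  show ?thesis
  proof (rule linearizable_cong[OF _ _ case3[of b02]])
    show "a02 * y^2 + a03 * y^3 = - (4/9) * b02^2 * y^3" for x y :: complex by (rule L3q(1)[OF h(1-6) a03])
    show "b20 * x^2 + b11 * x * y + b02 * y^2 + b30 * x^3 + b21 * x^2 * y + b12 * x * y^2 = b02 * y^2"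
      for x y :: complex by (rule L3q(2)[OF h(1-6) a03])
  qed
next
  assume h: "b12 = 0" "b30 = 0" "b21 = 0" "a03 = 0" "2 * b02 + 5 * b20 = 0" "10 * a02 - 3 * b11 = 0"
    "4 * b11^2 + 25 * b20^2 = 0"
  note ba = L4[OF h(5) h(6)]
  show ?thesis
  proof (rule linearizable_cong[OF _ _ case4[of b11 b20, OF h(7)]])
    show "a02 * y^2 + a03 * y^3 = (3/10)*b11*y^2" for x y :: complex by (rule L4q(1)[OF h(1-4) ba])
    show "b20 * x^2 + b11 * x * y + b02 * y^2 + b30 * x^3 + b21 * x^2 * y + b12 * x * y^2 = b20*x^2 + b11*x*y - (5/2)*b20*y^2"
      for x y :: complex by (rule L4q(2)[OF h(1-4) ba])
  qed
qed

end
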